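(* Let $(p,\mathcal D,L)$ be a Hadamard triple on $\mathbb R$ with $p>1$, $0\in\mathcal D\subset\{0,1,2,\dots\}$, and $p=\#\mathcal D$. Then $$T_{p,\mathcal D}=[0,1)\setminus\tfrac{1}{\gcd\mathcal D}\mathbb Z .$$
   Context: A Hadamard triple on $\mathbb R$ is a triple $(p,\mathcal D,L)$ with $p>1$ an integer, $\mathcal D,L\subset\mathbb Z$ finite with $\#\mathcal D=\#L$, such that $\frac{1}{\sqrt{\#\mathcal D}}\big[e^{2\pi i d\ell/p}\big]_{\ell\in L,d\in\mathcal D}$ is unitary. For finite $A\subset\mathbb R$, $\widehat{\delta_{cA}}(\xi)=\frac1{\#A}\sum_{a\in A}e^{2\pi i ca\xi}$. $T_{p,D}$ (the Double Points Condition Set) denotes the set of $\xi\in[0,1)$ for which there exist distinct $\ell_1,\ell_2\in\{0,\dots,p-1\}$ with $\widehat{\delta_{p^{-1}D}}(\xi+\ell_i)\ne0$, $i=1,2$. Here $\gcd\mathcal D$ is the greatest common divisor of the elements of $\mathcal D$ (with $\mathcal D\ne\{0\}$). *)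

theory Defs
  imports "HOL-Analysis.Analysis"
begin

definition had_entry :: "int \<Rightarrow> int \<Rightarrow> int \<Rightarrow> complex" where
  "had_entry p d l = cis (2 * pi * of_int d * of_int l / of_int p)"

definition hadamard_triple :: "int \<Rightarrow> int set \<Rightarrow> int set \<Rightarrow> bool" where
  "hadamard_triple p D L \<longleftrightarrow> p > 1 \<and> finite D \<and> finite L \<and> card D = card L \<and>
     (let U = (\<lambda>l d. had_entry p d l / complex_of_real (sqrt (real (card D)))) in
       (\<forall>l\<in>L. \<forall>l'\<in>L. (\<Sum>d\<in>D. U l d * cnj (U l' d)) = (if l = l' then 1 else 0)) \<and>
       (\<forall>d\<in>D. \<forall>d'\<in>D. (\<Sum>l\<in>L. cnj (U l d) * U l d') = (if d = d' then 1 else 0)))"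

text \<open>Fourier transform of the uniform measure on cA: (1/#A) sum_{a in A} e^{2 pi i c a xi}.\<close>
definition delta_hat :: "real \<Rightarrow> real set \<Rightarrow> real \<Rightarrow> complex" where
  "delta_hat c A \<xi> = (1 / of_nat (card A)) * (\<Sum>a\<in>A. cis (2 * pi * c * a * \<xi>))"

definition T_set :: "int \<Rightarrow> int set \<Rightarrow> real set" where
  "T_set p D = {\<xi>. 0 \<le> \<xi> \<and> \<xi> < 1 \<and>
     (\<exists>l1 l2. l1 \<in> {0..p-1} \<and> l2 \<in> {0..p-1} \<and> l1 \<noteq> l2 \<and>
        delta_hat (1 / of_int p) (of_int ` D) (\<xi> + of_int l1) \<noteq> 0 \<and>
        delta_hat (1 / of_int p) (of_int ` D) (\<xi> + of_int l2) \<noteq> 0)}"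

end

theory Submission
  imports Defs
begin

lemma cis_int: "cis (2 * pi * of_int n) = 1"
  by (simp add: cis.ctr cos_int_2pin sin_int_2pin complex_eq_iff)

lemma cis_period: "cis (x + 2 * pi * of_int n) = cis x"
  by (simp add: cis_mult[symmetric] cis_int)

lemma cis_eq1: "cis x = 1 \<Longrightarrow> \<exists>n::int. x = 2 * pi * of_int n"
proof -
  assume "cis x = 1"
  then have "cos x = 1" by (metis cis.sel(1) one_complex.sel(1))
  then obtain n where "x = real_of_int n * 2 * pi" using cos_one_2pi_int by blast
  then show ?thesis by (intro exI[of _ n]) simp
qed

lemma had_unfold:
  assumes H: "hadamard_triple p D L" and Dne: "D \<noteq> {}"
  shows "\<And>l l'. l\<in>L \<Longrightarrow> l'\<in>L \<Longrightarrow>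
      (\<Sum>d\<in>D. cis (2 * pi * of_int d * of_int (l-l') / of_int p)) = (if l = l' then of_nat (card D) else 0)"
    and "\<And>d d'. d\<in>D \<Longrightarrow> d'\<in>D \<Longrightarrow>
      (\<Sum>l\<in>L. cis (2 * pi * of_int (d'-d) * of_int l / of_int p)) = (if d = d' then of_nat (card D) else 0)"
proof -
  define s where "s = complex_of_real (sqrt (real (card D)))"
  have ss: "cnj s * s = of_nat (card D)" "s * cnj s = of_nat (card D)"
    unfolding s_def by (simp_all flip: of_real_mult)
  have rows: "\<forall>l\<in>L. \<forall>l'\<in>L. (\<Sum>d\<in>D. had_entry p d l / s * cnj (had_entry p d l' / s)) = (if l = l' then 1 else 0)"
   and cols: "\<forall>d\<in>D. \<forall>d'\<in>D. (\<Sum>l\<in>L. cnj (had_entry p d l / s) * (had_entry p d' l / s)) = (if d = d' then 1 else 0)"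
    using H unfolding hadamard_triple_def s_def Let_def by blast+
  have cD: "card D > 0" using H Dne unfolding hadamard_triple_def by auto
  {
    fix l l' assume l: "l\<in>L" "l'\<in>L"
    have e: "had_entry p d l / s * cnj (had_entry p d l' / s) = cis (2 * pi * of_int d * of_int (l-l') / of_int p) / of_nat (card D)" for d
    proof -
      have "had_entry p d l / s * cnj (had_entry p d l' / s) = (had_entry p d l * cnj (had_entry p d l')) / (s * cnj s)"
        by simp
      also have "had_entry p d l * cnj (had_entry p d l') = cis (2 * pi * of_int d * of_int (l-l') / of_int p)"
        unfolding had_entry_def cis_cnj cis_mult by (simp add: diff_divide_distrib right_diff_distrib)
      finally show ?thesis using ss by simp
    qed
    have "(\<Sum>d\<in>D. cis (2 * pi * of_int d * of_int (l-l') / of_int p)) / of_nat (card D) = (\<Sum>d\<in>D. had_entry p d l / s * cnj (had_entry p d l' / s))"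
      by (simp only: e sum_divide_distrib)
    also have "\<dots> = (if l = l' then 1 else 0)" using rows l by blast
    finally have X: "(\<Sum>d\<in>D. cis (2 * pi * of_int d * of_int (l-l') / of_int p)) / of_nat (card D) = (if l = l' then 1 else 0)" .
    then show "(\<Sum>d\<in>D. cis (2 * pi * of_int d * of_int (l-l') / of_int p)) = (if l = l' then of_nat (card D) else 0)"
      using cD by (simp add: divide_eq_eq split: if_splits)
  }
  {
    fix d d' assume d: "d\<in>D" "d'\<in>D"
    have e: "cnj (had_entry p d l / s) * (had_entry p d' l / s) = cis (2 * pi * of_int (d'-d) * of_int l / of_int p) / of_nat (card D)" for l
    proof -
      have "cnj (had_entry p d l / s) * (had_entry p d' l / s) = (cnj (had_entry p d l) * had_entry p d' l) / (cnj s * s)"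
        by simp
      also have "cnj (had_entry p d l) * had_entry p d' l = cis (2 * pi * of_int (d'-d) * of_int l / of_int p)"
        unfolding had_entry_def cis_cnj cis_mult by (rule arg_cong[where f=cis]) (simp add: diff_divide_distrib algebra_simps)
      finally show ?thesis using ss by simp
    qed
    have "(\<Sum>l\<in>L. cis (2 * pi * of_int (d'-d) * of_int l / of_int p)) / of_nat (card D) = (\<Sum>l\<in>L. cnj (had_entry p d l / s) * (had_entry p d' l / s))"
      by (simp only: e sum_divide_distrib)
    also have "\<dots> = (if d = d' then 1 else 0)" using cols d by blast
    finally have X: "(\<Sum>l\<in>L. cis (2 * pi * of_int (d'-d) * of_int l / of_int p)) / of_nat (card D) = (if d = d' then 1 else 0)" .
    then show "(\<Sum>l\<in>L. cis (2 * pi * of_int (d'-d) * of_int l / of_int p)) = (if d = d' then of_nat (card D) else 0)"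
      using cD by (simp add: divide_eq_eq split: if_splits)
  }
qed

lemma cis_dvd: assumes "p \<noteq> 0" "p dvd m"
  shows "cis (2 * pi * of_int k * of_int m / of_int p) = 1"
proof -
  obtain q where m: "m = p * q" using assms by (auto elim: dvdE)
  have "2 * pi * of_int k * of_int m / of_int p = 2 * pi * of_int (k * q)"
    using assms(1) by (simp add: m field_simps)
  then show ?thesis by (simp add: cis_int)
qed

lemma cis_mod: assumes "p \<noteq> 0"
  shows "cis (2 * pi * of_int k * of_int (l mod p) / of_int p) = cis (2 * pi * of_int k * of_int l / of_int p)"
proof -
  have eq: "real_of_int l = of_int (l mod p) + of_int p * of_int (l div p)"
    by (simp flip: of_int_mult of_int_add)
  have "2 * pi * of_int k * of_int l / of_int p
     = 2 * pi * of_int k * of_int (l mod p) / of_int p + 2 * pi * of_int (k * (l div p))"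
    unfolding eq using assms by (simp add: divide_simps) (simp add: algebra_simps)
  then show ?thesis by (simp only: cis_period)
qed

lemma mod_image:
  fixes p :: int and A :: "int set"
  assumes "p > 0" "finite A" "inj_on (\<lambda>x. x mod p) A" "int (card A) = p"
  shows "(\<lambda>x. x mod p) ` A = {0..p-1}"
proof (rule card_subset_eq)
  show "finite {0..p-1}" by simp
  show "(\<lambda>x. x mod p) ` A \<subseteq> {0..p-1}" using assms(1) by auto
  show "card ((\<lambda>x. x mod p) ` A) = card {0..p-1}"
    using assms by (simp add: card_image)
qed

lemma residues:
  assumes H: "hadamard_triple p D L" and Dne: "D \<noteq> {}" and pc: "p = int (card D)"
  shows "inj_on (\<lambda>x. x mod p) L" "(\<lambda>x. x mod p) ` L = {0..p-1}"
    "inj_on (\<lambda>x. x mod p) D" "(\<lambda>x. x mod p) ` D = {0..p-1}"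
proof -
  have p1: "p > 1" and fD: "finite D" and fL: "finite L" and cDL: "card D = card L"
    using H unfolding hadamard_triple_def by auto
  have cD: "card D > 0" using fD Dne by auto
  show iL: "inj_on (\<lambda>x. x mod p) L"
  proof (rule inj_onI, rule ccontr)
    fix l l' assume l: "l \<in> L" "l' \<in> L" "l mod p = l' mod p" "l \<noteq> l'"
    have "p dvd (l - l')" using l(3) by (simp add: mod_eq_dvd_iff)
    then have "(\<Sum>d\<in>D. cis (2 * pi * of_int d * of_int (l-l') / of_int p)) = of_nat (card D)"
      using p1 cis_dvd[of p "l-l'"] by simp
    moreover have "(\<Sum>d\<in>D. cis (2 * pi * of_int d * of_int (l-l') / of_int p)) = 0"
      using had_unfold(1)[OF H Dne l(1,2)] l(4) by simp
    ultimately show False using cD by simp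
  qed
  show "(\<lambda>x. x mod p) ` L = {0..p-1}"
  proof (rule mod_image[OF _ fL iL])
    show "0 < p" using p1 by simp
    show "int (card L) = p" using pc cDL by simp
  qed
  show iD: "inj_on (\<lambda>x. x mod p) D"
  proof (rule inj_onI, rule ccontr)
    fix d d' assume d: "d \<in> D" "d' \<in> D" "d mod p = d' mod p" "d \<noteq> d'"
    have "p dvd (d' - d)" using d(3) by (metis mod_eq_dvd_iff)
    then have "(\<Sum>l\<in>L. cis (2 * pi * of_int (d'-d) * of_int l / of_int p)) = of_nat (card L)"
      using p1 cis_dvd[of p "d'-d"] by (simp add: mult.commute[of _ "of_int l" for l] mult.assoc)
    moreover have "(\<Sum>l\<in>L. cis (2 * pi * of_int (d'-d) * of_int l / of_int p)) = 0"
      using had_unfold(2)[OF H Dne d(1,2)] d(4) by simp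
    ultimately show False using cD cDL by simp
  qed
  show "(\<lambda>x. x mod p) ` D = {0..p-1}"
  proof (rule mod_image[OF _ fD iD])
    show "0 < p" using p1 by simp
    show "int (card D) = p" using pc by simp
  qed
qed

definition ee :: "int \<Rightarrow> int \<Rightarrow> real \<Rightarrow> int \<Rightarrow> complex" where
  "ee p d \<xi> l = cis (2 * pi * (1 / of_int p) * of_int d * (\<xi> + of_int l))"

definition AA :: "int \<Rightarrow> int set \<Rightarrow> real \<Rightarrow> int \<Rightarrow> complex" where
  "AA p D \<xi> l = (\<Sum>d\<in>D. ee p d \<xi> l)"

lemma delta_AA:
  assumes "finite D" "D \<noteq> {}"
  shows "(delta_hat (1 / of_int p) (of_int ` D) (\<xi> + of_int l) \<noteq> 0) = (AA p D \<xi> l \<noteq> 0)"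
proof -
  have inj: "inj_on (of_int :: int \<Rightarrow> real) D" by (simp add: inj_on_def)
  have "delta_hat (1 / of_int p) (of_int ` D) (\<xi> + of_int l) = (1 / of_nat (card D)) * AA p D \<xi> l"
    unfolding delta_hat_def AA_def ee_def by (simp add: card_image[OF inj] sum.reindex[OF inj])
  then show ?thesis using assms by simp
qed

lemma ee_cnj: "ee p d \<xi> l * cnj (ee p d \<xi> l) = 1"
  unfolding ee_def cis_cnj cis_mult by simp

lemma orth_xi:
  assumes H: "hadamard_triple p D L" and Dne: "D \<noteq> {}" and pc: "p = int (card D)"
    and d: "d \<in> D" "d' \<in> D" "d \<noteq> d'"
  shows "(\<Sum>l\<in>{0..p-1}. ee p d' \<xi> l * cnj (ee p d \<xi> l)) = 0"
proof -
  have p1: "p > 1" and fL: "finite L" using H unfolding hadamard_triple_def by auto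
  have pz: "real_of_int p \<noteq> 0" using p1 by simp
  have t: "ee p d' \<xi> l * cnj (ee p d \<xi> l) = cis (2 * pi * (1 / of_int p) * of_int (d'-d) * \<xi>) *
      cis (2 * pi * of_int (d'-d) * of_int l / of_int p)" for l
    unfolding ee_def cis_cnj cis_mult by (rule arg_cong[where f=cis]) (use pz in \<open>simp add: field_simps\<close>)
  have "(\<Sum>l\<in>{0..p-1}. cis (2 * pi * of_int (d'-d) * of_int l / of_int p))
      = (\<Sum>l\<in>(\<lambda>x. x mod p) ` L. cis (2 * pi * of_int (d'-d) * of_int l / of_int p))"
    using residues(2)[OF H Dne pc] by simp
  also have "\<dots> = (\<Sum>l\<in>L. cis (2 * pi * of_int (d'-d) * of_int (l mod p) / of_int p))"
    using sum.reindex[OF residues(1)[OF H Dne pc]] by simp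
  also have "\<dots> = (\<Sum>l\<in>L. cis (2 * pi * of_int (d'-d) * of_int l / of_int p))"
    by (intro sum.cong refl cis_mod) (use p1 in simp)
  also have "\<dots> = 0" using had_unfold(2)[OF H Dne d(1,2)] d(3) by simp
  finally have z: "(\<Sum>l\<in>{0..p-1}. cis (2 * pi * of_int (d'-d) * of_int l / of_int p)) = 0" .
  show ?thesis unfolding t sum_distrib_left[symmetric] z by simp
qed

lemma keyK:
  assumes H: "hadamard_triple p D L" and Dne: "D \<noteq> {}" and pc: "p = int (card D)"
    and d0: "d0 \<in> D"
  shows "(\<Sum>l\<in>{0..p-1}. cnj (ee p d0 \<xi> l) * AA p D \<xi> l) = of_int p"
proof -
  have fD: "finite D" using H unfolding hadamard_triple_def by auto
  have "(\<Sum>l\<in>{0..p-1}. cnj (ee p d0 \<xi> l) * AA p D \<xi> l)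
     = (\<Sum>l\<in>{0..p-1}. \<Sum>d\<in>D. ee p d \<xi> l * cnj (ee p d0 \<xi> l))"
    unfolding AA_def by (simp add: sum_distrib_left mult.commute)
  also have "\<dots> = (\<Sum>d\<in>D. \<Sum>l\<in>{0..p-1}. ee p d \<xi> l * cnj (ee p d0 \<xi> l))"
    by (rule sum.swap)
  also have "\<dots> = (\<Sum>d\<in>D. if d = d0 then of_int p else 0)"
  proof (rule sum.cong[OF refl])
    fix d assume d: "d \<in> D"
    show "(\<Sum>l\<in>{0..p-1}. ee p d \<xi> l * cnj (ee p d0 \<xi> l)) = (if d = d0 then of_int p else 0)"
    proof (cases "d = d0")
      case True
      have "card {0..p-1} = nat p" by simp
      then show ?thesis using True pc by (simp add: ee_cnj)
    next
      case False
      then show ?thesis using orth_xi[OF H Dne pc d0 d] by simp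
    qed
  qed
  also have "\<dots> = of_int p" using fD d0 by simp
  finally show ?thesis .
qed

lemma parseval:
  assumes H: "hadamard_triple p D L" and Dne: "D \<noteq> {}" and pc: "p = int (card D)"
  shows "(\<Sum>l\<in>{0..p-1}. (norm (AA p D \<xi> l))^2) = (of_int p)^2"
proof -
  have fD: "finite D" using H unfolding hadamard_triple_def by auto
  have c: "cnj (AA p D \<xi> l) = (\<Sum>d0\<in>D. cnj (ee p d0 \<xi> l))" for l
    unfolding AA_def by simp
  have "complex_of_real (\<Sum>l\<in>{0..p-1}. (norm (AA p D \<xi> l))^2) = (\<Sum>l\<in>{0..p-1}. AA p D \<xi> l * cnj (AA p D \<xi> l))"
    by (simp only: of_real_sum complex_norm_square)
  also have "\<dots> = (\<Sum>l\<in>{0..p-1}. \<Sum>d0\<in>D. cnj (ee p d0 \<xi> l) * AA p D \<xi> l)"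
    by (simp only: c sum_distrib_left mult.commute)
  also have "\<dots> = (\<Sum>d0\<in>D. \<Sum>l\<in>{0..p-1}. cnj (ee p d0 \<xi> l) * AA p D \<xi> l)"
    by (rule sum.swap)
  also have "\<dots> = (\<Sum>d0\<in>D. of_int p)" using keyK[OF H Dne pc] by simp
  also have "\<dots> = complex_of_real ((of_int p)^2)" using pc by (simp add: power2_eq_square)
  finally show ?thesis using of_real_eq_iff by blast
qed

lemma gcd_ideal:
  fixes A :: "int set" and y :: real
  assumes "finite A" "\<forall>a\<in>A. \<exists>n::int. of_int a * y = of_int n"
  shows "\<exists>n::int. of_int (Gcd A) * y = of_int n"
  using assms
proof (induction A rule: finite_induct)
  case empty
  then show ?case by (intro exI[of _ 0]) simp
next
  case (insert a A)
  then obtain n1 where n1: "of_int (Gcd A) * y = of_int n1" by blast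
  from insert obtain n2 where n2: "of_int a * y = of_int n2" by blast
  obtain u v where uv: "u * a + v * Gcd A = gcd a (Gcd A)" using bezout_int by blast
  have "of_int (Gcd (insert a A)) * y = of_int (u * a + v * Gcd A) * y" by (simp add: uv)
  also have "\<dots> = of_int u * (of_int a * y) + of_int v * (of_int (Gcd A) * y)" by (simp add: algebra_simps)
  also have "\<dots> = of_int (u * n2 + v * n1)" by (simp add: n1 n2)
  finally show ?case by blast
qed

lemma unique_nz:
  assumes H: "hadamard_triple p D L" and Dne: "D \<noteq> {}" and pc: "p = int (card D)"
    and l0: "l0 \<in> {0..p-1}" and all1: "\<forall>d\<in>D. ee p d \<xi> l0 = 1"
    and l: "l \<in> {0..p-1}" "l \<noteq> l0"
  shows "AA p D \<xi> l = 0"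
proof -
  let ?n = "\<lambda>l. (norm (AA p D \<xi> l))^2"
  have "AA p D \<xi> l0 = of_nat (card D)" unfolding AA_def using all1 by simp
  then have n0: "?n l0 = (of_int p)^2" using pc by simp
  have "(\<Sum>l\<in>{0..p-1}. ?n l) = ?n l0 + (\<Sum>l\<in>{0..p-1}-{l0}. ?n l)"
    using l0 by (simp add: sum.remove)
  then have "(\<Sum>l\<in>{0..p-1}-{l0}. ?n l) = 0" using parseval[OF H Dne pc, of \<xi>] n0 by simp
  then have "\<forall>l\<in>{0..p-1}-{l0}. ?n l = 0" by (subst (asm) sum_nonneg_eq_0_iff) auto
  then show ?thesis using l by simp
qed

lemma exists_l0:
  assumes H: "hadamard_triple p D L" and Dne: "D \<noteq> {}" and pc: "p = int (card D)" and D0: "0 \<in> D"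
    and no2: "\<not> (\<exists>l1 l2. l1 \<in> {0..p-1} \<and> l2 \<in> {0..p-1} \<and> l1 \<noteq> l2 \<and> AA p D \<xi> l1 \<noteq> 0 \<and> AA p D \<xi> l2 \<noteq> 0)"
  shows "\<exists>l0\<in>{0..p-1}. \<forall>d\<in>D. ee p d \<xi> l0 = 1"
proof -
  have p1: "p > 1" using H unfolding hadamard_triple_def by auto
  have e0: "ee p 0 \<xi> l = 1" for l unfolding ee_def by simp
  have s0: "(\<Sum>l\<in>{0..p-1}. AA p D \<xi> l) = of_int p" using keyK[OF H Dne pc D0, of \<xi>] by (simp add: e0)
  obtain l0 where l0: "l0 \<in> {0..p-1}" "AA p D \<xi> l0 \<noteq> 0"
  proof (rule ccontr)
    assume "\<not> thesis"
    then have "\<forall>l\<in>{0..p-1}. AA p D \<xi> l = 0" using that by blast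
    then have "(\<Sum>l\<in>{0..p-1}. AA p D \<xi> l) = 0" by simp
    then show False using s0 p1 by simp
  qed
  have oth: "AA p D \<xi> l = 0" if "l \<in> {0..p-1}" "l \<noteq> l0" for l
    using no2 l0 that by blast
  have red: "(\<Sum>l\<in>{0..p-1}. cnj (ee p d0 \<xi> l) * AA p D \<xi> l) = cnj (ee p d0 \<xi> l0) * AA p D \<xi> l0" for d0
  proof -
    have "(\<Sum>l\<in>{0..p-1}. cnj (ee p d0 \<xi> l) * AA p D \<xi> l) = cnj (ee p d0 \<xi> l0) * AA p D \<xi> l0 +
       (\<Sum>l\<in>{0..p-1}-{l0}. cnj (ee p d0 \<xi> l) * AA p D \<xi> l)"
      using l0(1) by (simp add: sum.remove)
    also have "(\<Sum>l\<in>{0..p-1}-{l0}. cnj (ee p d0 \<xi> l) * AA p D \<xi> l) = 0"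
      using oth by (intro sum.neutral) auto
    finally show ?thesis by simp
  qed
  have a0: "AA p D \<xi> l0 = of_int p" using keyK[OF H Dne pc D0, of \<xi>] red[of 0] by (simp add: e0)
  have "ee p d \<xi> l0 = 1" if d: "d \<in> D" for d
  proof -
    have "cnj (ee p d \<xi> l0) * of_int p = of_int p" using keyK[OF H Dne pc d, of \<xi>] red[of d] a0 by simp
    then have "cnj (ee p d \<xi> l0) = 1" using p1 by simp
    then show ?thesis by (metis complex_cnj_cnj complex_cnj_one)
  qed
  then show ?thesis using l0(1) by blast
qed

lemma claimC:
  assumes H: "hadamard_triple p D L" and Dne: "D \<noteq> {}" and pc: "p = int (card D)"
  shows "(\<exists>l0\<in>{0..p-1}. \<forall>d\<in>D. ee p d \<xi> l0 = 1) \<longleftrightarrow> (\<exists>k::int. \<xi> = of_int k / of_int (Gcd D))"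
proof -
  have p1: "p > 1" and fD: "finite D" using H unfolding hadamard_triple_def by auto
  have "1 \<in> (\<lambda>x. x mod p) ` D" using residues(4)[OF H Dne pc] p1 by simp
  then obtain d1 where d1: "d1 \<in> D" "d1 mod p = 1" by auto
  define g where "g = Gcd D"
  have gd1: "g dvd d1" unfolding g_def using d1(1) by (simp add: Gcd_dvd)
  have g0: "g \<noteq> 0" using gd1 d1(2) by auto
  have gr0: "real_of_int g \<noteq> 0" using g0 by simp
  have pr0: "real_of_int p \<noteq> 0" using p1 by simp
  have cop: "gcd g p = 1"
  proof -
    have "gcd g p dvd d1" using gd1 by (meson dvd_trans gcd_dvd1)
    moreover have "gcd g p dvd p" by simp
    ultimately have "gcd g p dvd d1 mod p" by (simp add: dvd_mod)
    then have "gcd g p dvd 1" using d1(2) by simp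
    then show ?thesis by simp
  qed
  show ?thesis
  proof
    assume "\<exists>l0\<in>{0..p-1}. \<forall>d\<in>D. ee p d \<xi> l0 = 1"
    then obtain l0 where l0: "l0 \<in> {0..p-1}" "\<forall>d\<in>D. ee p d \<xi> l0 = 1" by blast
    have "\<forall>d\<in>D. \<exists>n::int. of_int d * ((\<xi> + of_int l0) / of_int p) = of_int n"
    proof
      fix d assume "d \<in> D"
      then have "cis (2 * pi * (1 / of_int p) * of_int d * (\<xi> + of_int l0)) = 1" using l0(2) unfolding ee_def by blast
      then obtain n where "2 * pi * (1 / of_int p) * of_int d * (\<xi> + of_int l0) = 2 * pi * of_int n"
        using cis_eq1 by blast
      then have "2 * pi * (of_int d * ((\<xi> + of_int l0) / of_int p)) = 2 * pi * of_int n" by (simp add: field_simps)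
      then have "of_int d * ((\<xi> + of_int l0) / of_int p) = of_int n"
        using mult_cancel_left[of "2 * pi"] pi_neq_zero by (metis mult_eq_0_iff zero_neq_numeral)
      then show "\<exists>n::int. of_int d * ((\<xi> + of_int l0) / of_int p) = of_int n" by blast
    qed
    then obtain n where n: "of_int g * ((\<xi> + of_int l0) / of_int p) = of_int n"
      using gcd_ideal[OF fD] unfolding g_def by blast
    then have "of_int g * \<xi> = of_int (p * n - g * l0)" using pr0 by (simp add: field_simps)
    then have "\<xi> = of_int (p * n - g * l0) / of_int g" using gr0 by (simp add: field_simps)
    then show "\<exists>k::int. \<xi> = of_int k / of_int (Gcd D)" unfolding g_def by blast
  next
    assume "\<exists>k::int. \<xi> = of_int k / of_int (Gcd D)"
    then obtain k where k: "\<xi> = of_int k / of_int g" unfolding g_def by blast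
    obtain u v where uv: "u * g + v * p = 1" using bezout_int[of g p] cop by auto
    define l0 where "l0 = (- k * u) mod p"
    have l0r: "l0 \<in> {0..p-1}" unfolding l0_def using p1 by simp
    have "k + g * l0 = k * v * p - g * p * ((- k * u) div p)"
    proof -
      have hl: "l0 = - k * u - p * ((- k * u) div p)" unfolding l0_def by (simp add: minus_div_mult_eq_mod[symmetric])
      have "k + g * l0 = k * (1 - u * g) - g * p * ((- k * u) div p)" unfolding hl by (simp add: algebra_simps)
      also have "1 - u * g = v * p" using uv by simp
      finally show ?thesis by (simp add: algebra_simps)
    qed
    then obtain m where m: "k + g * l0 = p * m" by (metis mult.commute right_diff_distrib mult.assoc)
    have "ee p d \<xi> l0 = 1" if d: "d \<in> D" for d
    proof -
      have "g dvd d" unfolding g_def using d by (simp add: Gcd_dvd)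
      then obtain t where t: "d = g * t" by (auto elim: dvdE)
      have "2 * pi * (1 / of_int p) * of_int d * (\<xi> + of_int l0) = 2 * pi * of_int (t * m)"
      proof -
        have "of_int d * (\<xi> + of_int l0) = of_int t * (of_int k + of_int g * of_int l0)"
          unfolding k t using gr0 by (simp add: field_simps)
        also have "\<dots> = of_int t * (of_int p * of_int m)" using m by (metis of_int_add of_int_mult)
        finally have E: "of_int d * (\<xi> + of_int l0) = of_int t * (of_int p * of_int m)" .
        have "2 * pi * (1 / of_int p) * of_int d * (\<xi> + of_int l0) = 2 * pi * (1 / of_int p) * (of_int d * (\<xi> + of_int l0))"
          by (simp only: mult.assoc)
        also have "\<dots> = 2 * pi * (1 / of_int p) * (of_int t * (of_int p * of_int m))" by (simp only: E)
        also have "\<dots> = 2 * pi * of_int (t * m)" using pr0 by simp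
        finally show ?thesis .
      qed
      then show ?thesis unfolding ee_def by (simp add: cis_int)
    qed
    then show "\<exists>l0\<in>{0..p-1}. \<forall>d\<in>D. ee p d \<xi> l0 = 1" using l0r by blast
  qed
qed

theorem lemma3p3:
  fixes p :: int and D L :: "int set"
  assumes "hadamard_triple p D L"
    and "p > 1"
    and "0 \<in> D"
    and "\<forall>d\<in>D. d \<ge> 0"
    and "p = int (card D)"
  shows "T_set p D = {0..<1} - {of_int k / of_int (Gcd D) | k :: int. True}"
proof -
  note H = assms(1)
  have Dne: "D \<noteq> {}" using assms(3) by auto
  note pc = assms(5)
  have fD: "finite D" using H unfolding hadamard_triple_def by auto
  have T: "T_set p D = {\<xi>. 0 \<le> \<xi> \<and> \<xi> < 1 \<and>
     (\<exists>l1 l2. l1 \<in> {0..p-1} \<and> l2 \<in> {0..p-1} \<and> l1 \<noteq> l2 \<and> AA p D \<xi> l1 \<noteq> 0 \<and> AA p D \<xi> l2 \<noteq> 0)}"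
    unfolding T_set_def delta_AA[OF fD Dne] by simp
  show ?thesis
  proof (rule set_eqI)
    fix \<xi> :: real
    have "(\<exists>l1 l2. l1 \<in> {0..p-1} \<and> l2 \<in> {0..p-1} \<and> l1 \<noteq> l2 \<and> AA p D \<xi> l1 \<noteq> 0 \<and> AA p D \<xi> l2 \<noteq> 0)
       \<longleftrightarrow> \<not> (\<exists>k::int. \<xi> = of_int k / of_int (Gcd D))"
    proof
      assume two: "\<exists>l1 l2. l1 \<in> {0..p-1} \<and> l2 \<in> {0..p-1} \<and> l1 \<noteq> l2 \<and> AA p D \<xi> l1 \<noteq> 0 \<and> AA p D \<xi> l2 \<noteq> 0"
      show "\<not> (\<exists>k::int. \<xi> = of_int k / of_int (Gcd D))"
      proof
        assume "\<exists>k::int. \<xi> = of_int k / of_int (Gcd D)"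
        then obtain l0 where l0: "l0 \<in> {0..p-1}" "\<forall>d\<in>D. ee p d \<xi> l0 = 1"
          using claimC[OF H Dne pc] by blast
        from two obtain l1 l2 where "l1 \<in> {0..p-1}" "l2 \<in> {0..p-1}" "l1 \<noteq> l2"
            "AA p D \<xi> l1 \<noteq> 0" "AA p D \<xi> l2 \<noteq> 0" by blast
        then show False using unique_nz[OF H Dne pc l0] by metis
      qed
    next
      assume "\<not> (\<exists>k::int. \<xi> = of_int k / of_int (Gcd D))"
      then show "\<exists>l1 l2. l1 \<in> {0..p-1} \<and> l2 \<in> {0..p-1} \<and> l1 \<noteq> l2 \<and> AA p D \<xi> l1 \<noteq> 0 \<and> AA p D \<xi> l2 \<noteq> 0"
        using exists_l0[OF H Dne pc assms(3)] claimC[OF H Dne pc] by blast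
    qed
    then show "\<xi> \<in> T_set p D \<longleftrightarrow> \<xi> \<in> {0..<1} - {of_int k / of_int (Gcd D) | k :: int. True}"
      unfolding T by auto
  qed
qed

end
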